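(* The mechanism that, given a dataset $D$, outputs $\operatorname{argmax}_{j\in[m-1]}\{h_{(j)}(D)-h_{(j+1)}(D)+Z_j\}$ with $Z_j$ i.i.d. $\mathcal{N}(0,\sigma^2)$ (RNM-Gaussian) satisfies $(\alpha,\frac{2\alpha}{\sigma^2}+\frac{\log m}{\alpha-1})$-RDP for all $\alpha>1$.
   Context: Setting: a dataset consists of users; there are $m$ candidates and each user votes $1$ for an arbitrary subset of candidates; $h_j(D)$ is the number of users voting for candidate $j$. Datasets are neighboring if one is obtained from the other by adding or removing one user. $h_{(1)}\ge\dots\ge h_{(m)}$ are the sorted counts. The Rényi divergence of order $\alpha>1$ is $\mathbb{D}_\alpha(P\|Q)=\frac{1}{\alpha-1}\log\mathbb{E}_{o\sim Q}[(P(o)/Q(o))^\alpha]$; a mechanism is $(\alpha,\epsilon(\alpha))$-RDP if $\mathbb{D}_\alpha(\mathcal{M}(D)\|\mathcal{M}(D'))\le\epsilon(\alpha)$ for all neighbors $D,D'$. *)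

theory Defs
  imports "HOL-Probability.Probability"
begin

text \<open>A dataset is a finite multiset of users; each user is the set of candidates
(from {0..<m}) it votes for.\<close>

type_synonym dataset = "nat set multiset"

definition valid_dataset :: "nat \<Rightarrow> dataset \<Rightarrow> bool" where
  "valid_dataset m D \<longleftrightarrow> (\<forall>S \<in> set_mset D. S \<subseteq> {..<m})"

definition hcount :: "dataset \<Rightarrow> nat \<Rightarrow> nat" where
  "hcount D j = size (filter_mset (\<lambda>S. j \<in> S) D)"

definition neighbors :: "nat \<Rightarrow> dataset \<Rightarrow> dataset \<Rightarrow> bool" where
  "neighbors m D D' \<longleftrightarrow>
     (\<exists>S. S \<subseteq> {..<m} \<and> (D' = D + {#S#} \<or> D = D' + {#S#}))"

text \<open>Sorted counts h_(1) >= ... >= h_(m), 1-indexed.\<close>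
definition hsorted :: "nat \<Rightarrow> dataset \<Rightarrow> nat \<Rightarrow> nat" where
  "hsorted m D j = rev (sort (map (hcount D) [0..<m])) ! (j - 1)"

definition rnm_score :: "nat \<Rightarrow> dataset \<Rightarrow> (nat \<Rightarrow> real) \<Rightarrow> nat \<Rightarrow> real" where
  "rnm_score m D z j = real (hsorted m D j) - real (hsorted m D (j + 1)) + z j"

text \<open>Argmax over [m-1] = {1..m-1}; ties (a null event) broken towards the smallest index.\<close>
definition rnm_argmax :: "nat \<Rightarrow> dataset \<Rightarrow> (nat \<Rightarrow> real) \<Rightarrow> nat" where
  "rnm_argmax m D z =
     (LEAST j. j \<in> {1..m-1} \<and> (\<forall>i \<in> {1..m-1}. rnm_score m D z i \<le> rnm_score m D z j))"

definition noise :: "nat \<Rightarrow> real \<Rightarrow> (nat \<Rightarrow> real) measure" where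
  "noise m \<sigma> = PiM {1..m-1} (\<lambda>_. density lborel (normal_density 0 \<sigma>))"

definition rnm_gauss :: "nat \<Rightarrow> real \<Rightarrow> dataset \<Rightarrow> nat \<Rightarrow> real" where
  "rnm_gauss m \<sigma> D k =
     measure (noise m \<sigma>) {z \<in> space (noise m \<sigma>). rnm_argmax m D z = k}"

definition renyi_div :: "real \<Rightarrow> 'a set \<Rightarrow> ('a \<Rightarrow> real) \<Rightarrow> ('a \<Rightarrow> real) \<Rightarrow> ereal" where
  "renyi_div \<alpha> Out P Q =
     (if \<exists>x \<in> Out. P x > 0 \<and> Q x = 0 then \<infinity>
      else ereal (1 / (\<alpha> - 1) *
        ln (\<Sum>x \<in> {x \<in> Out. Q x > 0}. Q x * (P x / Q x) powr \<alpha>)))"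

definition is_RDP :: "nat \<Rightarrow> 'a set \<Rightarrow> (dataset \<Rightarrow> 'a \<Rightarrow> real) \<Rightarrow> real \<Rightarrow> real \<Rightarrow> bool" where
  "is_RDP m Out M \<alpha> \<epsilon> \<longleftrightarrow>
     (\<forall>D D'. valid_dataset m D \<and> valid_dataset m D' \<and> neighbors m D D' \<longrightarrow>
        renyi_div \<alpha> Out (M D) (M D') \<le> ereal \<epsilon>)"

end

theory Submission
  imports Defs
begin
lemma sorted_nth_le_iff:
  fixes ys :: "'a::linorder list"
  assumes "sorted ys" "j < length ys"
  shows "ys!j \<le> v \<longleftrightarrow> j < length (filter (\<lambda>x. x \<le> v) ys)"
proof
  assume h: "ys!j \<le> v"
  have "{..j} \<subseteq> {i. i < length ys \<and> ys!i \<le> v}"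
    using assms h by (auto intro: order_trans[OF sorted_nth_mono[OF assms(1)]])
  then have "card {..j} \<le> card {i. i < length ys \<and> ys!i \<le> v}"
    by (intro card_mono) auto
  then show "j < length (filter (\<lambda>x. x \<le> v) ys)"
    by (simp add: length_filter_conv_card)
next
  assume h: "j < length (filter (\<lambda>x. x \<le> v) ys)"
  show "ys!j \<le> v"
  proof (rule ccontr)
    assume "\<not> ys!j \<le> v"
    have "{i. i < length ys \<and> ys!i \<le> v} \<subseteq> {..<j}"
    proof
      fix i assume i: "i \<in> {i. i < length ys \<and> ys!i \<le> v}"
      show "i \<in> {..<j}"
      proof (rule ccontr)
        assume "i \<notin> {..<j}"
        then have "ys!j \<le> ys!i" using i sorted_nth_mono[OF assms(1), of j i] by auto
        with i \<open>\<not> ys!j \<le> v\<close> show False by auto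
      qed
    qed
    then have "card {i. i < length ys \<and> ys!i \<le> v} \<le> card {..<j}"
      by (intro card_mono) auto
    with h show False by (simp add: length_filter_conv_card)
  qed
qed

lemma sort_nth_shift:
  fixes xs ys :: "nat list"
  assumes "length xs = length ys" "j < length xs" "\<And>i. i < length xs \<Longrightarrow> ys!i \<le> xs!i + c"
  shows "sort ys ! j \<le> sort xs ! j + c"
proof -
  define v where "v = sort xs ! j"
  have "j < length (filter (\<lambda>x. x \<le> v) (sort xs))"
    using sorted_nth_le_iff[of "sort xs" j v] assms by (simp add: v_def)
  also have "length (filter (\<lambda>x. x \<le> v) (sort xs)) = length (filter (\<lambda>x. x \<le> v) xs)"
    by (metis filter_sort length_sort)
  also have "\<dots> \<le> length (filter (\<lambda>x. x \<le> v + c) ys)"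
    unfolding length_filter_conv_card using assms
    by (intro card_mono) (auto, metis add_le_mono1 order_trans)
  also have "\<dots> = length (filter (\<lambda>x. x \<le> v + c) (sort ys))"
    by (metis filter_sort length_sort)
  finally show ?thesis
    using sorted_nth_le_iff[of "sort ys" j "v+c"] assms by (simp add: v_def)
qed

lemma hcount_add: "hcount (D + {#S#}) i = hcount D i + (if i \<in> S then 1 else 0)"
  by (simp add: hcount_def)

lemma hcount_add_mset: "hcount (add_mset S D) i = hcount D i + (if i \<in> S then 1 else 0)"
  by (simp add: hcount_def)

lemma hsorted_add:
  assumes "j \<in> {1..m}"
  shows "hsorted m D j \<le> hsorted m (D + {#S#}) j \<and> hsorted m (D + {#S#}) j \<le> hsorted m D j + 1"
proof -
  let ?xs = "map (hcount D) [0..<m]" and ?ys = "map (hcount (D + {#S#})) [0..<m]"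
  have idx: "m - j < m" using assms by auto
  have e1: "hsorted m D j = sort ?xs ! (m - j)"
    unfolding hsorted_def using assms by (subst rev_nth) (auto simp: Suc_diff_le)
  have e2: "hsorted m (D + {#S#}) j = sort ?ys ! (m - j)"
    unfolding hsorted_def using assms by (subst rev_nth) (auto simp: Suc_diff_le)
  have "sort ?xs ! (m - j) \<le> sort ?ys ! (m - j) + 0"
    using idx by (intro sort_nth_shift) (auto simp: hcount_add hcount_add_mset)
  moreover have "sort ?ys ! (m - j) \<le> sort ?xs ! (m - j) + 1"
    using idx by (intro sort_nth_shift) (auto simp: hcount_add hcount_add_mset)
  ultimately show ?thesis unfolding e1 e2 by simp
qed

definition gap :: "nat \<Rightarrow> dataset \<Rightarrow> nat \<Rightarrow> real" where
  "gap m D j = real (hsorted m D j) - real (hsorted m D (j + 1))"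

lemma gap_sens:
  assumes "neighbors m D D'" "j \<in> {1..m-1}"
  shows "\<bar>gap m D' j - gap m D j\<bar> \<le> 1"
proof -
  obtain S where "D' = D + {#S#} \<or> D = D' + {#S#}" using assms(1) by (auto simp: neighbors_def)
  moreover have j1: "j \<in> {1..m}" "j + 1 \<in> {1..m}" using assms(2) by auto
  ultimately show ?thesis
    using hsorted_add[OF j1(1), of D S] hsorted_add[OF j1(2), of D S]
          hsorted_add[OF j1(1), of D' S] hsorted_add[OF j1(2), of D' S]
    unfolding gap_def by auto
qed

definition gfun :: "real \<Rightarrow> real \<Rightarrow> real" where
  "gfun \<sigma> x = exp ((2*x - 2) / \<sigma>\<^sup>2)"

lemma nd_shift:
  assumes "\<sigma> > 0"
  shows "normal_density 0 \<sigma> x * gfun \<sigma> x = normal_density 2 \<sigma> x"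
proof -
  have "-(x - 0)\<^sup>2 / (2 * \<sigma>\<^sup>2) + (2*x - 2) / \<sigma>\<^sup>2 = -(x - 2)\<^sup>2 / (2 * \<sigma>\<^sup>2)"
    using assms by (simp add: field_simps power2_eq_square)
  then show ?thesis
    unfolding normal_density_def gfun_def
    by (simp add: mult.assoc flip: exp_add)
qed

lemma nd_shift2:
  assumes "\<sigma> > 0"
  shows "normal_density 0 \<sigma> x = normal_density 2 \<sigma> (x + 2)"
  unfolding normal_density_def by simp

lemma nd_mgf:
  assumes "\<sigma> > 0"
  shows "normal_density 0 \<sigma> x * exp (a * (2*x - 2) / \<sigma>\<^sup>2)
       = exp (2*a*(a-1)/\<sigma>\<^sup>2) * normal_density (2*a) \<sigma> x"
proof -
  have "-(x - 0)\<^sup>2 / (2 * \<sigma>\<^sup>2) + a * (2*x - 2) / \<sigma>\<^sup>2 = 2*a*(a-1)/\<sigma>\<^sup>2 + -(x - 2*a)\<^sup>2 / (2 * \<sigma>\<^sup>2)"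
    using assms by (simp add: field_simps power2_eq_square)
  then have "exp (-(x - 0)\<^sup>2 / (2 * \<sigma>\<^sup>2)) * exp (a * (2*x - 2) / \<sigma>\<^sup>2)
     = exp (2*a*(a-1)/\<sigma>\<^sup>2) * exp (-(x - 2*a)\<^sup>2 / (2 * \<sigma>\<^sup>2))"
    by (simp flip: exp_add)
  then show ?thesis
    unfolding normal_density_def by (simp add: mult_ac)
qed

lemma shift_1d_a:
  assumes "\<sigma> > 0" and A: "A \<in> sets borel"
  shows "emeasure (density lborel (normal_density 0 \<sigma>)) ((\<lambda>x. x + 2) -` A)
       = emeasure (density lborel (normal_density 2 \<sigma>)) A"
proof -
  have [measurable]: "(\<lambda>x::real. x + 2) -` A \<in> sets borel"
    by (rule measurable_sets_borel[OF _ A]) simp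
  have "emeasure (density lborel (normal_density 0 \<sigma>)) ((\<lambda>x. x + 2) -` A)
      = (\<integral>\<^sup>+ x. ennreal (normal_density 0 \<sigma> x) * indicator ((\<lambda>x. x + 2) -` A) x \<partial>lborel)"
    by (subst emeasure_density) auto
  also have "\<dots> = (\<integral>\<^sup>+ x. ennreal (normal_density 2 \<sigma> (2 + 1 * x)) * indicator A (2 + 1 * x) \<partial>lborel)"
    using nd_shift2[OF assms(1)]
    by (intro nn_integral_cong) (auto simp: indicator_def add.commute)
  also have "\<dots> = (\<integral>\<^sup>+ x. ennreal (normal_density 2 \<sigma> x) * indicator A x \<partial>lborel)"
    using nn_integral_real_affine[of "\<lambda>x. ennreal (normal_density 2 \<sigma> x) * indicator A x" 1 2] A
    by simp
  also have "\<dots> = emeasure (density lborel (normal_density 2 \<sigma>)) A"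
    using A by (subst emeasure_density) auto
  finally show ?thesis .
qed

lemma shift_1d_b:
  assumes "\<sigma> > 0" and A: "A \<in> sets borel"
  shows "(\<integral>\<^sup>+ x. ennreal (gfun \<sigma> x) * indicator A x \<partial>density lborel (normal_density 0 \<sigma>))
       = emeasure (density lborel (normal_density 2 \<sigma>)) A"
proof -
  have [measurable]: "gfun \<sigma> \<in> borel_measurable borel" unfolding gfun_def by measurable
  have "(\<integral>\<^sup>+ x. ennreal (gfun \<sigma> x) * indicator A x \<partial>density lborel (normal_density 0 \<sigma>))
     = (\<integral>\<^sup>+ x. ennreal (normal_density 0 \<sigma> x) * (ennreal (gfun \<sigma> x) * indicator A x) \<partial>lborel)"
    using A by (subst nn_integral_density) auto
  also have "\<dots> = (\<integral>\<^sup>+ x. ennreal (normal_density 2 \<sigma> x) * indicator A x \<partial>lborel)"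
    using nd_shift[OF assms(1)]
    by (intro nn_integral_cong) (auto simp: indicator_def ennreal_mult'' normal_density_nonneg gfun_def simp flip: ennreal_mult)
  also have "\<dots> = emeasure (density lborel (normal_density 2 \<sigma>)) A"
    using A by (subst emeasure_density) auto
  finally show ?thesis .
qed

lemma mgf_1d:
  assumes "\<sigma> > 0"
  shows "(\<integral>\<^sup>+ x. ennreal (exp (a * (2*x - 2) / \<sigma>\<^sup>2)) \<partial>density lborel (normal_density 0 \<sigma>))
       = ennreal (exp (2*a*(a-1)/\<sigma>\<^sup>2))"
proof -
  interpret prob_space "density lborel (normal_density (2*a) \<sigma>)"
    using prob_space_normal_density assms by blast
  have "(\<integral>\<^sup>+ x. ennreal (exp (a * (2*x - 2) / \<sigma>\<^sup>2)) \<partial>density lborel (normal_density 0 \<sigma>))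
     = (\<integral>\<^sup>+ x. ennreal (normal_density 0 \<sigma> x) * ennreal (exp (a * (2*x - 2) / \<sigma>\<^sup>2)) \<partial>lborel)"
    by (subst nn_integral_density) auto
  also have "\<dots> = (\<integral>\<^sup>+ x. ennreal (exp (2*a*(a-1)/\<sigma>\<^sup>2)) * ennreal (normal_density (2*a) \<sigma> x) \<partial>lborel)"
    using nd_mgf[OF assms]
    by (intro nn_integral_cong) (simp add: normal_density_nonneg flip: ennreal_mult)
  also have "\<dots> = ennreal (exp (2*a*(a-1)/\<sigma>\<^sup>2)) * (\<integral>\<^sup>+ x. ennreal (normal_density (2*a) \<sigma> x) \<partial>lborel)"
    by (subst nn_integral_cmult) auto
  also have "(\<integral>\<^sup>+ x. ennreal (normal_density (2*a) \<sigma> x) \<partial>lborel) = 1"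
    using emeasure_space_1 by (simp add: emeasure_density)
  finally show ?thesis by simp
qed

abbreviation N0 :: "real \<Rightarrow> real measure" where
  "N0 \<sigma> \<equiv> density lborel (\<lambda>x. ennreal (normal_density 0 \<sigma> x))"
abbreviation N2 :: "real \<Rightarrow> real measure" where
  "N2 \<sigma> \<equiv> density lborel (\<lambda>x. ennreal (normal_density 2 \<sigma> x))"

definition Tshift :: "nat \<Rightarrow> nat \<Rightarrow> (nat \<Rightarrow> real) \<Rightarrow> (nat \<Rightarrow> real)" where
  "Tshift m k z = (\<lambda>i\<in>{1..m-1}. if i = k then z i + 2 else z i)"

definition Mp :: "real \<Rightarrow> nat \<Rightarrow> nat \<Rightarrow> real measure" where
  "Mp \<sigma> k i = (if i = k then N2 \<sigma> else N0 \<sigma>)"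

lemma sets_Mp[simp, measurable_cong]: "sets (Mp \<sigma> k i) = sets borel"
  by (simp add: Mp_def)

lemma space_Mp[simp]: "space (Mp \<sigma> k i) = UNIV"
  by (simp add: Mp_def)

lemma prob_Mp: "\<sigma> > 0 \<Longrightarrow> prob_space (Mp \<sigma> k i)"
  by (simp add: Mp_def prob_space_normal_density)

lemma psf_Mp: "\<sigma> > 0 \<Longrightarrow> product_sigma_finite (Mp \<sigma> k)"
  unfolding product_sigma_finite_def using prob_Mp prob_space_imp_sigma_finite by blast

lemma psf_N0: "\<sigma> > 0 \<Longrightarrow> product_sigma_finite (\<lambda>_. N0 \<sigma>)"
  unfolding product_sigma_finite_def using prob_space_normal_density prob_space_imp_sigma_finite by blast

lemma sets_noise: "sets (noise m \<sigma>) = sets (PiM {1..m-1} (Mp \<sigma> k))"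
  unfolding noise_def by (intro sets_PiM_cong) auto

lemma space_noise: "space (noise m \<sigma>) = PiE {1..m-1} (\<lambda>_. UNIV)"
  unfolding noise_def by (simp add: space_PiM)

lemma Tshift_meas[measurable]: "Tshift m k \<in> measurable (noise m \<sigma>) (noise m \<sigma>)"
  unfolding Tshift_def noise_def by measurable

lemma distr_shift:
  assumes "\<sigma> > 0" "k \<in> {1..m-1}"
  shows "distr (noise m \<sigma>) (noise m \<sigma>) (Tshift m k) = PiM {1..m-1} (Mp \<sigma> k)"
proof -
  interpret product_sigma_finite "Mp \<sigma> k" using psf_Mp[OF assms(1)] .
  interpret N: product_sigma_finite "\<lambda>_. N0 \<sigma>" using psf_N0[OF assms(1)] .
  show ?thesis
  proof (rule PiM_eqI)
    show "sets (distr (noise m \<sigma>) (noise m \<sigma>) (Tshift m k)) = sets (PiM {1..m-1} (Mp \<sigma> k))"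
      using sets_noise by simp
  next
    fix A assume A: "\<And>i. i \<in> {1..m-1} \<Longrightarrow> A i \<in> sets (Mp \<sigma> k i)"
    define A' where "A' i = (if i = k then (\<lambda>x. x + 2) -` A k else A i)" for i
    have A'm: "A' i \<in> sets borel" if "i \<in> {1..m-1}" for i
    proof -
      have "(\<lambda>x::real. x + 2) -` A k \<in> sets borel"
        by (rule measurable_sets_borel[OF _ A[OF assms(2), simplified]]) simp
      then show ?thesis using A[OF that] unfolding A'_def by auto
    qed
    have box: "PiE {1..m-1} A \<in> sets (noise m \<sigma>)"
      using A unfolding noise_def by (intro sets_PiM_I_finite) auto
    have pre: "Tshift m k -` PiE {1..m-1} A \<inter> space (noise m \<sigma>) = PiE {1..m-1} A'"
      using assms(2) unfolding space_noise Tshift_def A'_def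
      by (auto simp: PiE_iff extensional_def split: if_splits)
    have "emeasure (distr (noise m \<sigma>) (noise m \<sigma>) (Tshift m k)) (PiE {1..m-1} A)
        = emeasure (noise m \<sigma>) (PiE {1..m-1} A')"
      by (simp only: emeasure_distr[OF Tshift_meas box] pre)
    also have "\<dots> = (\<Prod>i\<in>{1..m-1}. emeasure (N0 \<sigma>) (A' i))"
      unfolding noise_def using A'm by (subst N.emeasure_PiM) auto
    also have "\<dots> = (\<Prod>i\<in>{1..m-1}. emeasure (Mp \<sigma> k i) (A i))"
    proof (rule prod.cong)
      fix i assume i: "i \<in> {1..m-1}"
      show "emeasure (N0 \<sigma>) (A' i) = emeasure (Mp \<sigma> k i) (A i)"
        using A[OF i] shift_1d_a[OF assms(1), of "A i"] unfolding A'_def Mp_def by auto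
    qed simp
    finally show "emeasure (distr (noise m \<sigma>) (noise m \<sigma>) (Tshift m k)) (PiE {1..m-1} A)
        = (\<Prod>i\<in>{1..m-1}. emeasure (Mp \<sigma> k i) (A i))" .
  qed simp
qed


lemma comp_meas:
  assumes "k \<in> {1..m-1}"
  shows "(\<lambda>z. z k) \<in> borel_measurable (noise m \<sigma>)"
proof -
  have "(\<lambda>z. z k) \<in> measurable (noise m \<sigma>) (N0 \<sigma>)"
    unfolding noise_def by (rule measurable_component_singleton[OF assms])
  then show ?thesis using measurable_cong_sets[OF refl, of "N0 \<sigma>" borel "noise m \<sigma>"] by simp
qed

lemma gfun_meas[measurable]: "gfun \<sigma> \<in> borel_measurable borel"
  unfolding gfun_def by measurable

lemma indicator_PiE_prod:
  assumes "finite I" "z \<in> extensional I"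
  shows "indicator (PiE I A) z = (\<Prod>i\<in>I. indicator (A i) (z i) :: ennreal)"
proof (cases "z \<in> PiE I A")
  case True
  then show ?thesis by (auto simp: PiE_iff intro!: prod.neutral)
next
  case False
  then obtain i where i: "i \<in> I" "z i \<notin> A i" using assms by (auto simp: PiE_iff)
  then have "(\<Prod>i\<in>I. indicator (A i) (z i) :: ennreal) = indicator (A i) (z i) * (\<Prod>j\<in>I-{i}. indicator (A j) (z j))"
    using assms(1) by (subst prod.remove) auto
  with i False show ?thesis by simp
qed

lemma density_shift:
  assumes "\<sigma> > 0" "k \<in> {1..m-1}"
  shows "density (noise m \<sigma>) (\<lambda>z. ennreal (gfun \<sigma> (z k))) = PiM {1..m-1} (Mp \<sigma> k)"
proof -
  interpret product_sigma_finite "Mp \<sigma> k" using psf_Mp[OF assms(1)] .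
  interpret N: product_sigma_finite "\<lambda>_. N0 \<sigma>" using psf_N0[OF assms(1)] .
  note cm = comp_meas[OF assms(2), of \<sigma>]
  have Gm: "(\<lambda>z. ennreal (gfun \<sigma> (z k))) \<in> borel_measurable (noise m \<sigma>)"
    by (rule measurable_compose[OF cm]) measurable
  show ?thesis
  proof (rule PiM_eqI)
    show "sets (density (noise m \<sigma>) (\<lambda>z. ennreal (gfun \<sigma> (z k)))) = sets (PiM {1..m-1} (Mp \<sigma> k))"
      using sets_noise by simp
  next
    fix A assume A: "\<And>i. i \<in> {1..m-1} \<Longrightarrow> A i \<in> sets (Mp \<sigma> k i)"
    define f where "f i x = (if i = k then ennreal (gfun \<sigma> x) else 1) * indicator (A i) x" for i x
    have box: "PiE {1..m-1} A \<in> sets (noise m \<sigma>)"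
      using A unfolding noise_def by (intro sets_PiM_I_finite) auto
    have "emeasure (density (noise m \<sigma>) (\<lambda>z. ennreal (gfun \<sigma> (z k)))) (PiE {1..m-1} A)
        = (\<integral>\<^sup>+ z. ennreal (gfun \<sigma> (z k)) * indicator (PiE {1..m-1} A) z \<partial>noise m \<sigma>)"
      using box Gm by (subst emeasure_density) auto
    also have "\<dots> = (\<integral>\<^sup>+ z. (\<Prod>i\<in>{1..m-1}. f i (z i)) \<partial>noise m \<sigma>)"
    proof (rule nn_integral_cong)
      fix z assume z: "z \<in> space (noise m \<sigma>)"
      then have ext: "z \<in> extensional {1..m-1}" by (simp add: space_noise PiE_iff)
      have "(\<Prod>i\<in>{1..m-1}. f i (z i)) = (\<Prod>i\<in>{1..m-1}. (if i = k then ennreal (gfun \<sigma> (z i)) else 1)) * (\<Prod>i\<in>{1..m-1}. indicator (A i) (z i))"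
        unfolding f_def by (rule prod.distrib)
      also have "(\<Prod>i\<in>{1..m-1}. (if i = k then ennreal (gfun \<sigma> (z i)) else 1)) = ennreal (gfun \<sigma> (z k))"
        using assms(2) by simp
      finally show "ennreal (gfun \<sigma> (z k)) * indicator (PiE {1..m-1} A) z = (\<Prod>i\<in>{1..m-1}. f i (z i))"
        using indicator_PiE_prod[OF _ ext, of A] by simp
    qed
    also have "\<dots> = (\<Prod>i\<in>{1..m-1}. integral\<^sup>N (N0 \<sigma>) (f i))"
      unfolding noise_def
    proof (rule N.product_nn_integral_prod)
      fix i assume i: "i \<in> {1..m-1}"
      have [measurable]: "A i \<in> sets borel" using A[OF i] by simp
      show "f i \<in> borel_measurable (N0 \<sigma>)" unfolding f_def by measurable
    qed simp
    also have "\<dots> = (\<Prod>i\<in>{1..m-1}. emeasure (Mp \<sigma> k i) (A i))"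
    proof (rule prod.cong)
      fix i assume i: "i \<in> {1..m-1}"
      have Ai: "A i \<in> sets borel" using A[OF i] by simp
      show "integral\<^sup>N (N0 \<sigma>) (f i) = emeasure (Mp \<sigma> k i) (A i)"
      proof (cases "i = k")
        case True
        then have "f i = (\<lambda>x. ennreal (gfun \<sigma> x) * indicator (A i) x)" by (auto simp: f_def)
        then show ?thesis using shift_1d_b[OF assms(1) Ai] True by (simp add: Mp_def)
      next
        case False
        then have "f i = (\<lambda>x. indicator (A i) x)" by (auto simp: f_def)
        then show ?thesis using Ai False by (simp add: Mp_def)
      qed
    qed simp
    finally show "emeasure (density (noise m \<sigma>) (\<lambda>z. ennreal (gfun \<sigma> (z k)))) (PiE {1..m-1} A)
        = (\<Prod>i\<in>{1..m-1}. emeasure (Mp \<sigma> k i) (A i))" .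
  qed simp
qed

lemma shift_eq:
  assumes "\<sigma> > 0" "k \<in> {1..m-1}" "B \<in> sets (noise m \<sigma>)"
  shows "emeasure (noise m \<sigma>) (Tshift m k -` B \<inter> space (noise m \<sigma>))
       = emeasure (density (noise m \<sigma>) (\<lambda>z. ennreal (gfun \<sigma> (z k)))) B"
proof -
  have "emeasure (distr (noise m \<sigma>) (noise m \<sigma>) (Tshift m k)) B
      = emeasure (noise m \<sigma>) (Tshift m k -` B \<inter> space (noise m \<sigma>))"
    by (rule emeasure_distr[OF Tshift_meas assms(3)])
  then show ?thesis
    by (simp only: distr_shift[OF assms(1,2)] density_shift[OF assms(1,2)])
qed

lemma holder_real:
  fixes \<alpha> p q E :: real
  assumes a: "\<alpha> > 1" and p: "p \<ge> 0" and q: "q \<ge> 0" and E: "E > 0"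
  and H: "\<And>c. c > 0 \<Longrightarrow> p \<le> c powr (1-\<alpha>) * E / \<alpha> + (1 - 1/\<alpha>) * c * q"
  shows "p powr \<alpha> \<le> E * q powr (\<alpha> - 1)"
proof (cases "q > 0")
  case True
  define lE where "lE = ln E"
  define lq where "lq = ln q"
  define c where "c = exp ((lE - lq) / \<alpha>)"
  define u where "u = exp (lE / \<alpha> + (1 - 1/\<alpha>) * lq)"
  have Eq: "E = exp lE" "q = exp lq" using E True by (simp_all add: lE_def lq_def)
  have c0: "c > 0" by (simp add: c_def)
  have "c powr (1-\<alpha>) * E = exp ((1-\<alpha>) * ((lE - lq) / \<alpha>) + lE)"
    by (simp add: powr_def c_def Eq exp_add)
  also have "(1-\<alpha>) * ((lE - lq) / \<alpha>) + lE = lE / \<alpha> + (1 - 1/\<alpha>) * lq"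
    using a by (simp add: field_simps)
  finally have 1: "c powr (1-\<alpha>) * E = u" unfolding u_def .
  have "c * q = exp ((lE - lq) / \<alpha> + lq)"
    by (simp add: c_def Eq exp_add)
  also have "(lE - lq) / \<alpha> + lq = lE / \<alpha> + (1 - 1/\<alpha>) * lq"
    using a by (simp add: field_simps)
  finally have 2: "c * q = u" unfolding u_def .
  have "p \<le> c powr (1-\<alpha>) * E / \<alpha> + (1 - 1/\<alpha>) * (c * q)"
    using H[OF c0] by (simp add: mult.assoc)
  also have "\<dots> = u" unfolding 1 2 using a by (simp add: field_simps)
  finally have pu: "p \<le> u" .
  have "p powr \<alpha> \<le> u powr \<alpha>" using pu p a by (intro powr_mono2) auto
  also have "u powr \<alpha> = exp (\<alpha> * (lE / \<alpha> + (1 - 1/\<alpha>) * lq))"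
    by (simp add: powr_def u_def)
  also have "\<dots> = exp lE * exp ((\<alpha> - 1) * lq)"
    using a by (simp add: mult_exp_exp field_simps)
  also have "\<dots> = E * q powr (\<alpha> - 1)"
    using True by (simp add: Eq powr_def)
  finally show ?thesis .
next
  case False
  then have q0: "q = 0" using q by simp
  have "p = 0"
  proof (rule ccontr)
    assume "p \<noteq> 0"
    then have pp: "p > 0" using p by simp
    define c where "c = exp (ln (\<alpha> * p / (2 * E)) / (1 - \<alpha>))"
    have c0: "c > 0" by (simp add: c_def)
    have "c powr (1-\<alpha>) = exp ((1-\<alpha>) * (ln (\<alpha> * p / (2 * E)) / (1 - \<alpha>)))"
      by (simp add: powr_def c_def)
    also have "\<dots> = \<alpha> * p / (2 * E)" using a pp E by simp
    finally have "c powr (1-\<alpha>) * E / \<alpha> = p / 2" using a E by (simp add: field_simps)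
    with H[OF c0] q0 pp show False by simp
  qed
  then show ?thesis using q0 a by simp
qed

lemma young_pt:
  fixes \<alpha> y c :: real
  assumes a: "\<alpha> > 1" and y: "y \<ge> 0" and c: "c > 0"
  shows "y \<le> c powr (1-\<alpha>) / \<alpha> * y powr \<alpha> + (1 - 1/\<alpha>) * c"
proof -
  define t where "t = y / c"
  have t0: "t \<ge> 0" using y c by (simp add: t_def)
  have q: "\<alpha> / (\<alpha> - 1) > 1" using a by (simp add: field_simps)
  have "t * 1 \<le> t powr \<alpha> / \<alpha> + 1 powr (\<alpha> / (\<alpha> - 1)) / (\<alpha> / (\<alpha> - 1))"
    using a q t0 by (intro Youngs_inequality) (auto simp: field_simps)
  then have "t \<le> t powr \<alpha> / \<alpha> + (1 - 1/\<alpha>)" using a by (simp add: field_simps)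
  then have h1: "c * t \<le> c * (t powr \<alpha> / \<alpha>) + (1 - 1/\<alpha>) * c" using c
    by (metis distrib_left mult.commute mult_le_cancel_left_pos)
  have e1: "c * t = y" using c by (simp add: t_def)
  have e2: "c * (t powr \<alpha> / \<alpha>) = c powr (1-\<alpha>) / \<alpha> * y powr \<alpha>"
  proof -
    have "t powr \<alpha> = y powr \<alpha> / c powr \<alpha>" using y c by (simp add: t_def powr_divide)
    moreover have "c powr (1-\<alpha>) = c / c powr \<alpha>" using c by (simp add: powr_diff)
    ultimately show ?thesis by simp
  qed
  show ?thesis using h1 unfolding e1 e2 .
qed

lemma comp_meas_any: "(\<lambda>z. z i) \<in> borel_measurable (noise m \<sigma>)"
proof (cases "i \<in> {1..m-1}")
  case True then show ?thesis by (rule comp_meas)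
next
  case False
  have "(\<lambda>z. undefined) \<in> borel_measurable (noise m \<sigma>)" by simp
  moreover have "\<And>z. z \<in> space (noise m \<sigma>) \<Longrightarrow> z i = undefined"
    using False by (auto simp: space_noise PiE_iff extensional_def)
  ultimately show ?thesis
    using measurable_cong[of "noise m \<sigma>" "\<lambda>z. z i" "\<lambda>z. undefined" borel] by simp
qed

lemma score_eq: "rnm_score m D z i = gap m D i + z i"
  by (simp add: rnm_score_def gap_def)

lemma score_meas[measurable]: "(\<lambda>z. rnm_score m D z i) \<in> borel_measurable (noise m \<sigma>)"
  unfolding score_eq using comp_meas_any[of i m \<sigma>] by measurable

lemma score_le_pred[measurable]: "Measurable.pred (noise m \<sigma>) (\<lambda>z. rnm_score m D z i \<le> rnm_score m D z j)"
  unfolding pred_def by (rule borel_measurable_le[OF score_meas score_meas])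

lemma argmax_meas: "rnm_argmax m D \<in> measurable (noise m \<sigma>) (count_space UNIV)"
  unfolding rnm_argmax_def by measurable

lemma argset_sets: "{z \<in> space (noise m \<sigma>). rnm_argmax m D z = k} \<in> sets (noise m \<sigma>)"
  using argmax_meas by measurable

lemma argmax_char:
  assumes "m \<ge> 2"
  shows "rnm_argmax m D z = k \<longleftrightarrow>
    (k \<in> {1..m-1} \<and> (\<forall>i\<in>{1..m-1}. rnm_score m D z i \<le> rnm_score m D z k)) \<and>
    (\<forall>j<k. \<not> (j \<in> {1..m-1} \<and> (\<forall>i\<in>{1..m-1}. rnm_score m D z i \<le> rnm_score m D z j)))"
    (is "_ \<longleftrightarrow> ?P k \<and> (\<forall>j<k. \<not> ?P j)")
proof -
  let ?I = "{1..m-1::nat}" and ?s = "rnm_score m D z"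
  have ne: "?I \<noteq> {}" "finite ?I" using assms by auto
  have "Max (?s ` ?I) \<in> ?s ` ?I" using ne by (intro Max_in) auto
  then obtain j where j: "j \<in> ?I" "?s j = Max (?s ` ?I)" by (metis imageE)
  have ex: "?P j" using j ne by auto
  have eq: "rnm_argmax m D z = (LEAST j. ?P j)" by (simp add: rnm_argmax_def)
  show ?thesis
  proof
    assume "rnm_argmax m D z = k"
    then show "?P k \<and> (\<forall>j<k. \<not> ?P j)"
      unfolding eq using LeastI[of ?P j, OF ex] not_less_Least[of _ ?P] by blast
  next
    assume h: "?P k \<and> (\<forall>j<k. \<not> ?P j)"
    show "rnm_argmax m D z = k"
      unfolding eq
    proof (rule Least_equality)
      show "?P k" using h by blast
    next
      fix y assume "?P y"
      then show "k \<le> y" using h by (metis not_le)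
    qed
  qed
qed

lemma Tshift_app: "i \<in> {1..m-1} \<Longrightarrow> Tshift m k z i = (if i = k then z i + 2 else z i)"
  by (simp add: Tshift_def)

lemma incl:
  assumes m: "m \<ge> 2" and k: "k \<in> {1..m-1}" and nb: "neighbors m D D'"
    and h: "rnm_argmax m D z = k"
  shows "rnm_argmax m D' (Tshift m k z) = k"
proof -
  let ?I = "{1..m-1::nat}"
  have gs: "\<And>i. i \<in> ?I \<Longrightarrow> \<bar>gap m D' i - gap m D i\<bar> \<le> 1" using gap_sens[OF nb] by blast
  from h have A: "\<forall>i\<in>?I. gap m D i + z i \<le> gap m D k + z k"
    and B: "\<forall>j<k. j \<in> ?I \<longrightarrow> (\<exists>i\<in>?I. gap m D j + z j < gap m D i + z i)"
    using argmax_char[OF m, of D z k] by (auto simp: score_eq not_le)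
  have gk: "gap m D' k \<ge> gap m D k - 1" using gs[OF k] by simp
  show ?thesis
  proof (subst argmax_char[OF m], intro conjI allI impI)
    show "k \<in> ?I" by fact
    show "\<forall>i\<in>?I. rnm_score m D' (Tshift m k z) i \<le> rnm_score m D' (Tshift m k z) k"
    proof
      fix i assume i: "i \<in> ?I"
      show "rnm_score m D' (Tshift m k z) i \<le> rnm_score m D' (Tshift m k z) k"
      proof (cases "i = k")
        case False
        have a: "gap m D i + z i \<le> gap m D k + z k" using A i by blast
        have b: "gap m D' i \<le> gap m D i + 1" using gs[OF i] by (simp add: abs_le_iff)
        show ?thesis using False a b gk i k by (simp add: score_eq Tshift_app)
      qed simp
    qed
  next
    fix j assume j: "j < k"
    show "\<not> (j \<in> ?I \<and> (\<forall>i\<in>?I. rnm_score m D' (Tshift m k z) i \<le> rnm_score m D' (Tshift m k z) j))"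
    proof
      assume P: "j \<in> ?I \<and> (\<forall>i\<in>?I. rnm_score m D' (Tshift m k z) i \<le> rnm_score m D' (Tshift m k z) j)"
      then have jI: "j \<in> ?I" by blast
      obtain i where i: "i \<in> ?I" "gap m D j + z j < gap m D i + z i" using B j jI by blast
      have "rnm_score m D' (Tshift m k z) k \<le> rnm_score m D' (Tshift m k z) j" using P k by blast
      moreover have "j \<noteq> k" using j by simp
      ultimately show False
        using A i jI gs[OF jI] gk k by (force simp: score_eq Tshift_app)
    qed
  qed
qed

lemma prob_noise: "\<sigma> > 0 \<Longrightarrow> prob_space (noise m \<sigma>)"
  unfolding noise_def by (rule prob_space_PiM) (simp add: prob_space_normal_density)

lemma intH:
  assumes "\<sigma> > 0" "k \<in> {1..m-1}"
  shows "(\<integral>\<^sup>+ z. ennreal (exp (a * (2 * z k - 2) / \<sigma>\<^sup>2)) \<partial>noise m \<sigma>) = ennreal (exp (2*a*(a-1)/\<sigma>\<^sup>2))"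
proof -
  have cm: "(\<lambda>z. z k) \<in> measurable (noise m \<sigma>) (N0 \<sigma>)"
    unfolding noise_def by (rule measurable_component_singleton[OF assms(2)])
  have hm: "(\<lambda>x. ennreal (exp (a * (2 * x - 2) / \<sigma>\<^sup>2))) \<in> borel_measurable (N0 \<sigma>)"
    by measurable
  have "(\<integral>\<^sup>+ z. ennreal (exp (a * (2 * z k - 2) / \<sigma>\<^sup>2)) \<partial>noise m \<sigma>)
      = (\<integral>\<^sup>+ x. ennreal (exp (a * (2 * x - 2) / \<sigma>\<^sup>2)) \<partial>distr (noise m \<sigma>) (N0 \<sigma>) (\<lambda>z. z k))"
    using hm by (subst nn_integral_distr[OF cm]) auto
  also have "distr (noise m \<sigma>) (N0 \<sigma>) (\<lambda>z. z k) = N0 \<sigma>"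
    unfolding noise_def using assms by (intro distr_PiM_component) (auto simp: prob_space_normal_density)
  finally show ?thesis using mgf_1d[OF assms(1)] by simp
qed

lemma holder_meas:
  assumes s: "\<sigma> > 0" and k: "k \<in> {1..m-1}" and B: "B \<in> sets (noise m \<sigma>)" and a: "\<alpha> > 1"
  shows "measure (density (noise m \<sigma>) (\<lambda>z. ennreal (gfun \<sigma> (z k)))) B powr \<alpha>
       \<le> exp (2*\<alpha>*(\<alpha>-1)/\<sigma>\<^sup>2) * measure (noise m \<sigma>) B powr (\<alpha> - 1)"
proof -
  let ?\<nu> = "density (noise m \<sigma>) (\<lambda>z. ennreal (gfun \<sigma> (z k)))"
  let ?E = "exp (2*\<alpha>*(\<alpha>-1)/\<sigma>\<^sup>2)"
  interpret P: prob_space "noise m \<sigma>" using prob_noise[OF s] .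
  have "prob_space (PiM {1..m-1} (Mp \<sigma> k))" by (rule prob_space_PiM) (simp add: prob_Mp s)
  then interpret V: prob_space ?\<nu> by (simp add: density_shift[OF s k])
  note cm = comp_meas[OF k, of \<sigma>]
  have Gm: "(\<lambda>z. ennreal (gfun \<sigma> (z k))) \<in> borel_measurable (noise m \<sigma>)"
    by (rule measurable_compose[OF cm]) measurable
  have Hm: "(\<lambda>z. ennreal (exp (\<alpha> * (2 * z k - 2) / \<sigma>\<^sup>2))) \<in> borel_measurable (noise m \<sigma>)"
    by (rule measurable_compose[OF cm]) measurable
  show ?thesis
  proof (rule holder_real[OF a measure_nonneg measure_nonneg exp_gt_zero])
    fix c :: real assume c: "c > 0"
    define A where "A = c powr (1-\<alpha>) / \<alpha>"
    define b where "b = (1 - 1/\<alpha>) * c"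
    have A0: "A \<ge> 0" and b0: "b \<ge> 0" using a c by (auto simp: A_def b_def field_simps)
    have "ennreal (measure ?\<nu> B) = emeasure ?\<nu> B" by (simp add: V.emeasure_eq_measure)
    also have "\<dots> = (\<integral>\<^sup>+ z. ennreal (gfun \<sigma> (z k)) * indicator B z \<partial>noise m \<sigma>)"
      using B Gm by (subst emeasure_density) auto
    also have "\<dots> \<le> (\<integral>\<^sup>+ z. ennreal A * ennreal (exp (\<alpha> * (2 * z k - 2) / \<sigma>\<^sup>2)) + ennreal b * indicator B z \<partial>noise m \<sigma>)"
    proof (rule nn_integral_mono)
      fix z
      have y: "gfun \<sigma> (z k) \<le> A * exp (\<alpha> * (2 * z k - 2) / \<sigma>\<^sup>2) + b"
      proof -
        have "gfun \<sigma> (z k) powr \<alpha> = exp (\<alpha> * (2 * z k - 2) / \<sigma>\<^sup>2)"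
          by (simp add: gfun_def powr_def)
        then show ?thesis using young_pt[OF a _ c, of "gfun \<sigma> (z k)"]
          by (simp add: A_def b_def gfun_def)
      qed
      show "ennreal (gfun \<sigma> (z k)) * indicator B z \<le> ennreal A * ennreal (exp (\<alpha> * (2 * z k - 2) / \<sigma>\<^sup>2)) + ennreal b * indicator B z"
      proof (cases "z \<in> B")
        case True
        have "ennreal (gfun \<sigma> (z k)) \<le> ennreal (A * exp (\<alpha> * (2 * z k - 2) / \<sigma>\<^sup>2) + b)"
          using y by (rule ennreal_leI)
        also have "\<dots> = ennreal A * ennreal (exp (\<alpha> * (2 * z k - 2) / \<sigma>\<^sup>2)) + ennreal b"
          using A0 b0 by (simp add: ennreal_plus ennreal_mult)
        finally show ?thesis using True by simp
      qed simp
    qed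
    also have "\<dots> = ennreal A * (\<integral>\<^sup>+ z. ennreal (exp (\<alpha> * (2 * z k - 2) / \<sigma>\<^sup>2)) \<partial>noise m \<sigma>) + ennreal b * emeasure (noise m \<sigma>) B"
      using Hm B by (subst nn_integral_add) (auto simp: nn_integral_cmult)
    also have "\<dots> = ennreal (A * ?E + b * measure (noise m \<sigma>) B)"
      using intH[OF s k, of \<alpha>] A0 b0
      by (simp add: P.emeasure_eq_measure ennreal_plus ennreal_mult)
    finally have "measure ?\<nu> B \<le> A * ?E + b * measure (noise m \<sigma>) B"
      using A0 b0 by (subst (asm) ennreal_le_iff) auto
    then show "measure ?\<nu> B \<le> c powr (1-\<alpha>) * ?E / \<alpha> + (1 - 1/\<alpha>) * c * measure (noise m \<sigma>) B"
      by (simp add: A_def b_def)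
  qed
qed

lemma perk:
  assumes m: "m \<ge> 2" and s: "\<sigma> > 0" and a: "\<alpha> > 1" and k: "k \<in> {1..m-1}"
    and nb: "neighbors m D D'"
  shows "rnm_gauss m \<sigma> D k powr \<alpha> \<le> exp (2*\<alpha>*(\<alpha>-1)/\<sigma>\<^sup>2) * rnm_gauss m \<sigma> D' k powr (\<alpha> - 1)"
proof -
  interpret P: prob_space "noise m \<sigma>" using prob_noise[OF s] .
  let ?A = "{z \<in> space (noise m \<sigma>). rnm_argmax m D z = k}"
  let ?B = "{z \<in> space (noise m \<sigma>). rnm_argmax m D' z = k}"
  let ?\<nu> = "density (noise m \<sigma>) (\<lambda>z. ennreal (gfun \<sigma> (z k)))"
  have B: "?B \<in> sets (noise m \<sigma>)" by (rule argset_sets)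
  have TB: "Tshift m k -` ?B \<inter> space (noise m \<sigma>) \<in> sets (noise m \<sigma>)"
    by (rule measurable_sets[OF Tshift_meas B])
  have sub: "?A \<subseteq> Tshift m k -` ?B \<inter> space (noise m \<sigma>)"
    using incl[OF m k nb] measurable_space[OF Tshift_meas] by auto
  have "rnm_gauss m \<sigma> D k = measure (noise m \<sigma>) ?A" by (simp add: rnm_gauss_def)
  also have "\<dots> \<le> measure (noise m \<sigma>) (Tshift m k -` ?B \<inter> space (noise m \<sigma>))"
    by (rule P.finite_measure_mono[OF sub TB])
  also have "\<dots> = measure ?\<nu> ?B"
    unfolding measure_def using shift_eq[OF s k B] by simp
  finally have le: "rnm_gauss m \<sigma> D k \<le> measure ?\<nu> ?B" .
  have "rnm_gauss m \<sigma> D k powr \<alpha> \<le> measure ?\<nu> ?B powr \<alpha>"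
    using le a by (intro powr_mono2) (auto simp: rnm_gauss_def)
  also have "\<dots> \<le> exp (2*\<alpha>*(\<alpha>-1)/\<sigma>\<^sup>2) * measure (noise m \<sigma>) ?B powr (\<alpha> - 1)"
    by (rule holder_meas[OF s k B a])
  finally show ?thesis by (simp add: rnm_gauss_def)
qed

theorem mainTheorem3:
  fixes m :: nat and \<sigma> :: real
  assumes "m \<ge> 2" and "\<sigma> > 0"
  shows "\<forall>\<alpha>>1. is_RDP m {1..m-1} (rnm_gauss m \<sigma>) \<alpha>
                 (2 * \<alpha> / \<sigma>\<^sup>2 + ln (real m) / (\<alpha> - 1))"
proof (intro allI impI)
  fix \<alpha> :: real assume a: "\<alpha> > 1"
  let ?E = "exp (2*\<alpha>*(\<alpha>-1)/\<sigma>\<^sup>2)"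
  let ?Out = "{1..m-1::nat}"
  show "is_RDP m ?Out (rnm_gauss m \<sigma>) \<alpha> (2 * \<alpha> / \<sigma>\<^sup>2 + ln (real m) / (\<alpha> - 1))"
    unfolding is_RDP_def
  proof (intro allI impI, elim conjE)
    fix D D' assume nb: "neighbors m D D'"
    define P where "P = rnm_gauss m \<sigma> D"
    define Q where "Q = rnm_gauss m \<sigma> D'"
    have P0: "P x \<ge> 0" and Q0: "Q x \<ge> 0" for x by (simp_all add: P_def Q_def rnm_gauss_def)
    have bd: "P k powr \<alpha> \<le> ?E * Q k powr (\<alpha> - 1)" if "k \<in> ?Out" for k
      unfolding P_def Q_def by (rule perk[OF assms a that nb])
    have noac: "\<not> (\<exists>x \<in> ?Out. P x > 0 \<and> Q x = 0)"
    proof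
      assume "\<exists>x \<in> ?Out. P x > 0 \<and> Q x = 0"
      then obtain x where x: "x \<in> ?Out" "P x > 0" "Q x = 0" by blast
      have "P x powr \<alpha> \<le> 0" using bd[OF x(1)] x(3) a by simp
      moreover have "P x powr \<alpha> > 0" using x(2) by simp
      ultimately show False by simp
    qed
    define S where "S = (\<Sum>x \<in> {x \<in> ?Out. Q x > 0}. Q x * (P x / Q x) powr \<alpha>)"
    have tb: "Q k * (P k / Q k) powr \<alpha> \<le> ?E" if "k \<in> {x \<in> ?Out. Q x > 0}" for k
    proof -
      have k: "k \<in> ?Out" "Q k > 0" using that by auto
      have "Q k * P k powr \<alpha> \<le> Q k * (?E * Q k powr (\<alpha> - 1))"
        using bd[OF k(1)] k(2) by (intro mult_left_mono) auto
      also have "\<dots> = ?E * Q k powr \<alpha>"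
        using k(2) by (simp add: powr_diff field_simps)
      finally have "Q k * P k powr \<alpha> / Q k powr \<alpha> \<le> ?E"
        using k(2) by (simp add: divide_le_eq)
      then show ?thesis using k(2) P0 by (simp add: powr_divide)
    qed
    have S0: "S \<ge> 0" unfolding S_def by (intro sum_nonneg) (auto intro: mult_nonneg_nonneg)
    have "S \<le> real (card {x \<in> ?Out. Q x > 0}) * ?E"
      unfolding S_def by (rule sum_bounded_above) (rule tb)
    also have "\<dots> \<le> real (m - 1) * ?E"
    proof -
      have "card {x \<in> ?Out. Q x > 0} \<le> card ?Out" by (intro card_mono) auto
      then show ?thesis by (intro mult_right_mono) auto
    qed
    finally have Sle: "S \<le> real (m - 1) * ?E" .
    have eps0: "0 \<le> 2 * \<alpha> / \<sigma>\<^sup>2 + ln (real m) / (\<alpha> - 1)"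
      using a assms by (intro add_nonneg_nonneg divide_nonneg_nonneg) auto
    have "1 / (\<alpha> - 1) * ln S \<le> 2 * \<alpha> / \<sigma>\<^sup>2 + ln (real m) / (\<alpha> - 1)"
    proof (cases "S = 0")
      case True then show ?thesis using eps0 by simp
    next
      case False
      then have Sp: "S > 0" using S0 by simp
      have m1: "real (m - 1) > 0" using assms by simp
      have "ln S \<le> ln (real (m - 1) * ?E)" by (rule ln_mono[OF Sle Sp])
      also have "\<dots> = ln (real (m - 1)) + 2*\<alpha>*(\<alpha>-1)/\<sigma>\<^sup>2" using m1 by (simp add: ln_mult)
      also have "\<dots> \<le> ln (real m) + 2*\<alpha>*(\<alpha>-1)/\<sigma>\<^sup>2" using m1 by simp
      finally have "1 / (\<alpha> - 1) * ln S \<le> 1 / (\<alpha> - 1) * (ln (real m) + 2*\<alpha>*(\<alpha>-1)/\<sigma>\<^sup>2)"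
        using a by (intro mult_left_mono) auto
      also have "\<dots> = 2 * \<alpha> / \<sigma>\<^sup>2 + ln (real m) / (\<alpha> - 1)"
        using a assms by (simp add: field_simps)
      finally show ?thesis .
    qed
    then show "renyi_div \<alpha> ?Out (rnm_gauss m \<sigma> D) (rnm_gauss m \<sigma> D') \<le> ereal (2 * \<alpha> / \<sigma>\<^sup>2 + ln (real m) / (\<alpha> - 1))"
      using noac unfolding renyi_div_def P_def[symmetric] Q_def[symmetric] S_def[symmetric] by simp
  qed
qed

end
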